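(* Let $\mathcal{A}=\{H_{e_i}:\boldsymbol\alpha_{e_i}\cdot\mathbf{x}=0\mid 1\le i\le m\}$ be a linear multi-arrangement in $\mathbb{R}^n$ (each $\boldsymbol\alpha_{e_i}\ne 0$), totally ordered by $H_{e_1}\prec\cdots\prec H_{e_m}$, and let $\mathscr{B}_k$ and $\phi_k$ be as in the context. Then for each $k=1,\dots,m$, $\phi_k$ is a well-defined bijection from $\mathscr{B}_{k-1}$ onto $\mathscr{B}_k$. Consequently, the map sending a region $\Delta\in\mathcal{R}(\mathcal{A})$ to the unique $\mathcal{B}\in\mathrm{NBC}(\mathcal{A})$ with $\phi_m\circ\cdots\circ\phi_1(\emptyset,\Delta)=(\mathcal{B},\cap\mathcal{B})$ is a bijection from $\mathcal{R}(\mathcal{A})$ onto $\mathrm{NBC}(\mathcal{A})$.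
   Context: For a (multi)set $\mathcal{B}$ of hyperplanes, $\cap\mathcal{B}=\bigcap_{H\in\mathcal{B}}H$ (with $\cap\emptyset=\mathbb{R}^n$). A circuit of $\mathcal{A}$ is a minimal sub(multi)set $\mathcal{B}\subseteq\mathcal{A}$ with $\cap\mathcal{B}\ne\emptyset$ and $\dim(\cap\mathcal{B})+|\mathcal{B}|=n+1$; a broken circuit is a circuit with its $\prec$-maximal element removed; $\mathcal{B}\subseteq\mathcal{A}$ is an NBC subset if it contains no broken circuit (and $\cap\mathcal{B}\neq\emptyset$); $\mathrm{NBC}(\mathcal{A})$ is the set of NBC subsets. For a finite multiset $\mathcal{H}$ of hyperplanes in an affine subspace $W$, its regions are the connected components of $W-\bigcup_{H\in\mathcal{H}}H$ (if $\mathcal{H}=\emptyset$, the single region is $W$); $\mathcal{R}(\cdot)$ denotes the set of regions. $H_e^+:\boldsymbol\alpha_e\cdot\mathbf{x}>0$, $H_e^-:\boldsymbol\alpha_e\cdot\mathbf{x}<0$. Let $\mathcal{A}_k=\{H_{e_i}:i\le k\}$, $\mathcal{A}_k^c=\mathcal{A}-\mathcal{A}_k$, and for $\mathcal{B}\subseteq\mathcal{A}$, $\mathcal{A}_k^c/\mathcal{B}$ is the multi-arrangement in $\cap\mathcal{B}$ consisting of $(\cap\mathcal{B})\cap H$ for $H\in\mathcal{A}_k^c$ with $(\cap\mathcal{B})\cap H\ne\cap\mathcal{B}$ and $\ne\emptyset$. $\mathscr{B}_k=\{(\mathcal{B}_k,\Delta_k):\mathcal{B}_k\subseteq\mathcal{A}_k,\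 \mathcal{B}_k\in\mathrm{NBC}(\mathcal{A}),\ \Delta_k\in\mathcal{R}(\mathcal{A}_k^c/\mathcal{B}_k)\}$. For $(\mathcal{B}_{k-1},\Delta_{k-1})\in\mathscr{B}_{k-1}$ let $\Delta_k'$ be the unique region of $\mathcal{A}_k^c/\mathcal{B}_{k-1}$ containing $\Delta_{k-1}$, and set $\phi_k(\mathcal{B}_{k-1},\Delta_{k-1})=(\mathcal{B}_{k-1}\cup\{H_{e_k}\},\Delta_k'\cap H_{e_k})$ if $\Delta_{k-1}\subseteq H_{e_k}^+$ and $\Delta_{k-1}\ne\Delta_k'$; $=(\mathcal{B}_{k-1},\Delta_{k-1})$ if $\Delta_{k-1}\subseteq H_{e_k}^+$ and $\Delta_{k-1}=\Delta_k'$; $=(\mathcal{B}_{k-1},\Delta_k')$ if $\Delta_{k-1}\subseteq H_{e_k}^-$. *)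

theory Defs
  imports "HOL-Analysis.Analysis"
begin

text \<open>The multi-arrangement is given by normals alpha 1, ..., alpha m (repetitions allowed);
  hyperplane H_{e_i} is indexed by i, and the total order is the order of indices.
  Sub(multi)sets of the arrangement are sets of indices.\<close>

definition hyp :: "(nat \<Rightarrow> real^'n) \<Rightarrow> nat \<Rightarrow> (real^'n) set" where
  "hyp \<alpha> i = {x. \<alpha> i \<bullet> x = 0}"

definition Hpos :: "(nat \<Rightarrow> real^'n) \<Rightarrow> nat \<Rightarrow> (real^'n) set" where
  "Hpos \<alpha> i = {x. \<alpha> i \<bullet> x > 0}"

definition Hneg :: "(nat \<Rightarrow> real^'n) \<Rightarrow> nat \<Rightarrow> (real^'n) set" where
  "Hneg \<alpha> i = {x. \<alpha> i \<bullet> x < 0}"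

definition capB :: "(nat \<Rightarrow> real^'n) \<Rightarrow> nat set \<Rightarrow> (real^'n) set" where
  "capB \<alpha> B = (\<Inter>i\<in>B. hyp \<alpha> i)"

definition circ_cond :: "(nat \<Rightarrow> real^'n) \<Rightarrow> nat set \<Rightarrow> bool" where
  "circ_cond \<alpha> C \<longleftrightarrow> capB \<alpha> C \<noteq> {} \<and> dim (capB \<alpha> C) + card C = CARD('n) + 1"

definition circuit :: "(nat \<Rightarrow> real^'n) \<Rightarrow> nat \<Rightarrow> nat set \<Rightarrow> bool" where
  "circuit \<alpha> m C \<longleftrightarrow> C \<subseteq> {1..m} \<and> circ_cond \<alpha> C \<and> (\<forall>D. D \<subset> C \<longrightarrow> \<not> circ_cond \<alpha> D)"

definition broken_circuit :: "(nat \<Rightarrow> real^'n) \<Rightarrow> nat \<Rightarrow> nat set \<Rightarrow> bool" where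
  "broken_circuit \<alpha> m D \<longleftrightarrow> (\<exists>C. circuit \<alpha> m C \<and> D = C - {Max C})"

definition NBC :: "(nat \<Rightarrow> real^'n) \<Rightarrow> nat \<Rightarrow> nat set \<Rightarrow> bool" where
  "NBC \<alpha> m B \<longleftrightarrow> B \<subseteq> {1..m} \<and> capB \<alpha> B \<noteq> {} \<and>
     (\<forall>D. broken_circuit \<alpha> m D \<longrightarrow> \<not> D \<subseteq> B)"

definition NBCset :: "(nat \<Rightarrow> real^'n) \<Rightarrow> nat \<Rightarrow> nat set set" where
  "NBCset \<alpha> m = {B. NBC \<alpha> m B}"

definition regions :: "'a::topological_space set \<Rightarrow> 'a set set \<Rightarrow> 'a set set" where
  "regions W Hs = components (W - \<Union>Hs)"

text \<open>The arrangement A_k^c / B inside capB B (A_k^c = indices k+1..m).\<close>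
definition restr :: "(nat \<Rightarrow> real^'n) \<Rightarrow> nat \<Rightarrow> nat \<Rightarrow> nat set \<Rightarrow> (real^'n) set set" where
  "restr \<alpha> m k B = {capB \<alpha> B \<inter> hyp \<alpha> i | i. i \<in> {k+1..m} \<and>
      capB \<alpha> B \<inter> hyp \<alpha> i \<noteq> capB \<alpha> B \<and> capB \<alpha> B \<inter> hyp \<alpha> i \<noteq> {}}"

definition scrB :: "(nat \<Rightarrow> real^'n) \<Rightarrow> nat \<Rightarrow> nat \<Rightarrow> (nat set \<times> (real^'n) set) set" where
  "scrB \<alpha> m k = {(B, \<Delta>). B \<subseteq> {1..k} \<and> NBC \<alpha> m B \<and> \<Delta> \<in> regions (capB \<alpha> B) (restr \<alpha> m k B)}"

definition regionA :: "(nat \<Rightarrow> real^'n) \<Rightarrow> nat \<Rightarrow> (real^'n) set set" where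
  "regionA \<alpha> m = regions UNIV (hyp \<alpha> ` {1..m})"

definition regDelta :: "(nat \<Rightarrow> real^'n) \<Rightarrow> nat \<Rightarrow> nat \<Rightarrow> nat set \<Rightarrow> (real^'n) set \<Rightarrow> (real^'n) set" where
  "regDelta \<alpha> m k B \<Delta> = (THE R. R \<in> regions (capB \<alpha> B) (restr \<alpha> m k B) \<and> \<Delta> \<subseteq> R)"

definition phi :: "(nat \<Rightarrow> real^'n) \<Rightarrow> nat \<Rightarrow> nat \<Rightarrow> nat set \<times> (real^'n) set \<Rightarrow> nat set \<times> (real^'n) set" where
  "phi \<alpha> m k p = (let B = fst p; \<Delta> = snd p; \<Delta>' = regDelta \<alpha> m k B \<Delta> in
     if \<Delta> \<subseteq> Hpos \<alpha> k then
       (if \<Delta> \<noteq> \<Delta>' then (B \<union> {k}, \<Delta>' \<inter> hyp \<alpha> k) else (B, \<Delta>))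
     else (B, \<Delta>'))"

primrec phiComp :: "(nat \<Rightarrow> real^'n) \<Rightarrow> nat \<Rightarrow> nat \<Rightarrow> nat set \<times> (real^'n) set \<Rightarrow> nat set \<times> (real^'n) set" where
  "phiComp \<alpha> m 0 = id"
| "phiComp \<alpha> m (Suc j) = phi \<alpha> m (Suc j) \<circ> phiComp \<alpha> m j"

end

theory Submission
  imports Defs
begin

lemma capB_subspace: "subspace (capB \<alpha> B)"
  unfolding subspace_def capB_def hyp_def by (auto simp: inner_add_right)

lemma zero_capB: "0 \<in> capB \<alpha> B"
  unfolding capB_def hyp_def by auto

lemma capB_eq: "capB \<alpha> B = {y. \<forall>x\<in>span (\<alpha> ` B). orthogonal x y}"
proof
  show "capB \<alpha> B \<subseteq> {y. \<forall>x\<in>span (\<alpha> ` B). orthogonal x y}"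
  proof (clarify)
    fix y x assume y: "y \<in> capB \<alpha> B" and x: "x \<in> span (\<alpha> ` B)"
    have "orthogonal y x"
      by (rule orthogonal_to_span[OF x]) (use y in \<open>auto simp: capB_def hyp_def orthogonal_def inner_commute\<close>)
    then show "orthogonal x y" by (simp add: orthogonal_commute)
  qed
next
  show "{y. \<forall>x\<in>span (\<alpha> ` B). orthogonal x y} \<subseteq> capB \<alpha> B"
    by (auto simp: capB_def hyp_def orthogonal_def intro: span_base)
qed

lemma dim_capB: "dim (capB \<alpha> B) + dim (\<alpha> ` B) = CARD('n)"
  for \<alpha> :: "nat \<Rightarrow> real^'n"
proof -
  have "dim {y \<in> UNIV. \<forall>x \<in> span (\<alpha> ` B). orthogonal x y} + dim (span (\<alpha> ` B)) = dim (UNIV :: (real^'n) set)"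
    by (rule dim_subspace_orthogonal_to_vectors) auto
  then show ?thesis by (simp add: capB_eq dim_span)
qed

lemma in_span_if_cap:
  fixes \<alpha> :: "nat \<Rightarrow> real^'n"
  assumes "capB \<alpha> B \<subseteq> hyp \<alpha> i" shows "\<alpha> i \<in> span (\<alpha> ` B)"
proof -
  obtain y z where y: "y \<in> span (\<alpha> ` B)" and z: "\<And>w. w \<in> span (\<alpha> ` B) \<Longrightarrow> orthogonal z w"
    and e: "\<alpha> i = y + z"
    using orthogonal_subspace_decomp_exists by blast
  have "z \<in> capB \<alpha> B" unfolding capB_eq using z by (simp add: orthogonal_commute)
  then have "\<alpha> i \<bullet> z = 0" using assms by (auto simp: hyp_def)
  moreover have "y \<bullet> z = 0" using z[OF y] by (simp add: orthogonal_def inner_commute)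
  ultimately have "z \<bullet> z = 0" using e by (simp add: inner_add_left)
  then have "z = 0" by simp
  then show ?thesis using e y by simp
qed

lemma cap_if_in_span:
  assumes "\<alpha> i \<in> span (\<alpha> ` B)" shows "capB \<alpha> B \<subseteq> hyp \<alpha> i"
  using assms unfolding capB_eq by (auto simp: hyp_def orthogonal_def)

lemma circ_iff:
  fixes \<alpha> :: "nat \<Rightarrow> real^'n"
  shows "circ_cond \<alpha> C \<longleftrightarrow> card C = dim (\<alpha> ` C) + 1"
  using dim_capB[of \<alpha> C] zero_capB[of \<alpha> C] unfolding circ_cond_def by auto

definition indep :: "(nat \<Rightarrow> real^'n) \<Rightarrow> nat set \<Rightarrow> bool" where
  "indep \<alpha> D \<longleftrightarrow> (\<forall>d\<in>D. \<alpha> d \<notin> span (\<alpha> ` (D - {d})))"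

lemma indep_mono: "indep \<alpha> E \<Longrightarrow> D \<subseteq> E \<Longrightarrow> indep \<alpha> D"
  unfolding indep_def by (meson Diff_mono image_mono order_refl span_mono subsetD)

lemma indep_dim:
  assumes "indep \<alpha> D" shows "dim (\<alpha> ` D) = card D"
proof -
  have inj: "inj_on \<alpha> D"
  proof (rule inj_onI, rule ccontr)
    fix c d assume "c \<in> D" "d \<in> D" "\<alpha> c = \<alpha> d" "c \<noteq> d"
    then have "\<alpha> d \<in> span (\<alpha> ` (D - {d}))" by (metis DiffI imageI singletonD span_base)
    then show False using assms \<open>d \<in> D\<close> by (auto simp: indep_def)
  qed
  have "independent (\<alpha> ` D)"
  proof
    assume "dependent (\<alpha> ` D)"
    then obtain d where d: "d \<in> D" "\<alpha> d \<in> span (\<alpha> ` D - {\<alpha> d})" by (auto simp: dependent_def)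
    have "\<alpha> ` D - {\<alpha> d} \<subseteq> \<alpha> ` (D - {d})" by auto
    then have "\<alpha> d \<in> span (\<alpha> ` (D - {d}))" using d span_mono by blast
    then show False using assms d by (auto simp: indep_def)
  qed
  then show ?thesis using inj by (simp add: dim_eq_card_independent card_image)
qed

lemma nbc_not_sub:
  fixes \<alpha> :: "nat \<Rightarrow> real^'n"
  assumes nbc: "NBC \<alpha> m B" and i: "i \<in> {1..m}" and lt: "\<forall>b\<in>B. b < i"
  shows "\<not> capB \<alpha> B \<subseteq> hyp \<alpha> i"
proof
  assume "capB \<alpha> B \<subseteq> hyp \<alpha> i"
  then have sp: "\<alpha> i \<in> span (\<alpha> ` B)" by (rule in_span_if_cap)
  have Bsub: "B \<subseteq> {1..m}" using nbc by (simp add: NBC_def)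
  then have finB: "finite B" using finite_subset by blast
  define F where "F = {C0. C0 \<subseteq> B \<and> \<alpha> i \<in> span (\<alpha> ` C0)}"
  have "finite F" unfolding F_def using finB by auto
  moreover have "F \<noteq> {}" using sp unfolding F_def by auto
  ultimately obtain C0 where C0: "C0 \<in> F" and minC0: "\<forall>D\<in>F. D \<subseteq> C0 \<longrightarrow> C0 = D"
    using finite_has_minimal by blast
  have C0B: "C0 \<subseteq> B" and spC0: "\<alpha> i \<in> span (\<alpha> ` C0)" using C0 by (auto simp: F_def)
  have notF: "\<alpha> i \<notin> span (\<alpha> ` D)" if "D \<subset> C0" for D
    using minC0 that C0B unfolding F_def by blast
  have indC0: "indep \<alpha> C0"
    unfolding indep_def
  proof (intro ballI notI)
    fix c assume c: "c \<in> C0" and cs: "\<alpha> c \<in> span (\<alpha> ` (C0 - {c}))"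
    have "\<alpha> ` C0 = insert (\<alpha> c) (\<alpha> ` (C0 - {c}))" using c by auto
    then have "span (\<alpha> ` C0) = span (\<alpha> ` (C0 - {c}))" using span_redundant[OF cs] by simp
    then show False using notF[of "C0 - {c}"] spC0 c by auto
  qed
  have iC0: "i \<notin> C0" using C0B lt by auto
  define C where "C = insert i C0"
  have finC0: "finite C0" using C0B finB finite_subset by blast
  have cC: "circuit \<alpha> m C"
    unfolding circuit_def
  proof (intro conjI allI impI)
    show "C \<subseteq> {1..m}" using C0B Bsub i by (auto simp: C_def)
    have "dim (\<alpha> ` C) = dim (\<alpha> ` C0)" using spC0 by (simp add: C_def dim_insert)
    also have "\<dots> = card C0" using indep_dim[OF indC0] .
    finally show "circ_cond \<alpha> C" unfolding circ_iff using iC0 finC0 by (simp add: C_def)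
  next
    fix D assume D: "D \<subset> C"
    have "indep \<alpha> D"
    proof (cases "i \<in> D")
      case False
      then show ?thesis using D indep_mono[OF indC0] by (auto simp: C_def)
    next
      case True
      define D0 where "D0 = D - {i}"
      have D0: "D0 \<subset> C0" using D True iC0 by (auto simp: C_def D0_def)
      have DD: "D = insert i D0" using True by (auto simp: D0_def)
      have iD0: "i \<notin> D0" by (simp add: D0_def)
      have indD0: "indep \<alpha> D0" using indep_mono[OF indC0] D0 by auto
      show ?thesis unfolding indep_def
      proof (intro ballI notI)
        fix d assume d: "d \<in> D" and ds: "\<alpha> d \<in> span (\<alpha> ` (D - {d}))"
        show False
        proof (cases "d = i")
          case True
          then have "D - {d} = D0" by (simp add: D0_def)
          then show False using ds True notF[OF D0] by simp
        next
          case False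
          then have dD0: "d \<in> D0" using d DD by auto
          have "\<alpha> ` (D - {d}) = insert (\<alpha> i) (\<alpha> ` (D0 - {d}))" using DD False iD0 by auto
          moreover have "\<alpha> d \<notin> span (\<alpha> ` (D0 - {d}))" using indD0 dD0 by (auto simp: indep_def)
          ultimately have "\<alpha> i \<in> span (insert (\<alpha> d) (\<alpha> ` (D0 - {d})))"
            using ds in_span_insert by metis
          moreover have "insert (\<alpha> d) (\<alpha> ` (D0 - {d})) = \<alpha> ` D0" using dD0 by auto
          ultimately show False using notF[OF D0] by simp
        qed
      qed
    qed
    then have "dim (\<alpha> ` D) = card D" by (rule indep_dim)
    then show "\<not> circ_cond \<alpha> D" by (simp add: circ_iff)
  qed
  have "Max C = i" unfolding C_def using finC0 C0B lt
    by (metis Max_insert2 finite.insertI insertI1 less_imp_le subset_iff Max_eqI insertE)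
  then have "broken_circuit \<alpha> m C0" unfolding broken_circuit_def using cC iC0
    by (intro exI[of _ C]) (auto simp: C_def)
  then show False using nbc C0B by (auto simp: NBC_def)
qed

lemma circuit_span:
  fixes \<alpha> :: "nat \<Rightarrow> real^'n"
  assumes C: "circuit \<alpha> m C" and j: "j \<in> C"
  shows "\<alpha> j \<in> span (\<alpha> ` (C - {j}))"
proof (rule ccontr)
  assume ns: "\<alpha> j \<notin> span (\<alpha> ` (C - {j}))"
  have fin: "finite C" using C unfolding circuit_def using finite_subset by blast
  have "\<alpha> ` C = insert (\<alpha> j) (\<alpha> ` (C - {j}))" using j by auto
  then have d: "dim (\<alpha> ` C) = dim (\<alpha> ` (C - {j})) + 1" using ns by (simp add: dim_insert)
  have "card C = dim (\<alpha> ` C) + 1" using C by (simp add: circuit_def circ_iff)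
  moreover have "C - {j} \<subset> C" using j by auto
  then have "\<not> circ_cond \<alpha> (C - {j})" using C by (simp add: circuit_def)
  then have "card (C - {j}) \<noteq> dim (\<alpha> ` (C - {j})) + 1" by (simp add: circ_iff)
  ultimately show False using d fin j by (simp add: card_Diff_singleton)
qed

lemma nbc_subset: "NBC \<alpha> m B \<Longrightarrow> A \<subseteq> B \<Longrightarrow> NBC \<alpha> m A"
  unfolding NBC_def using zero_capB by blast

lemma capB_insert: "capB \<alpha> (insert k B) = capB \<alpha> B \<inter> hyp \<alpha> k"
  by (auto simp: capB_def)

lemma nbc_insert:
  fixes \<alpha> :: "nat \<Rightarrow> real^'n"
  assumes nbc: "NBC \<alpha> m B" and B: "B \<subseteq> {1..k-1}" and k: "k \<in> {1..m}"
    and z: "z \<in> capB \<alpha> B \<inter> hyp \<alpha> k"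
    and zn: "\<forall>j\<in>{k+1..m}. \<not> capB \<alpha> B \<subseteq> hyp \<alpha> j \<longrightarrow> \<alpha> j \<bullet> z \<noteq> 0"
  shows "NBC \<alpha> m (insert k B)"
proof -
  have s1: "insert k B \<subseteq> {1..m}" using nbc k by (auto simp: NBC_def)
  have s2: "capB \<alpha> (insert k B) \<noteq> {}" using zero_capB by blast
  have "\<not> D \<subseteq> insert k B" if bc: "broken_circuit \<alpha> m D" for D
  proof
    assume DB: "D \<subseteq> insert k B"
  obtain C where C: "circuit \<alpha> m C" and D: "D = C - {Max C}" using bc by (auto simp: broken_circuit_def)
  have kD: "k \<in> D"
  proof (rule ccontr)
    assume "k \<notin> D" then have "D \<subseteq> B" using DB by auto
    then show False using nbc bc by (auto simp: NBC_def)
  qed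
  have Cs: "C \<subseteq> {1..m}" using C by (simp add: circuit_def)
  then have fin: "finite C" using finite_subset by blast
  define j where "j = Max C"
  have kC: "k \<in> C" and kj': "k \<noteq> j" using kD D j_def by auto
  have jC: "j \<in> C" using Max_in[OF fin] kC j_def by blast
  have "k \<le> j" using Max_ge[OF fin kC] j_def by simp
  then have kj: "k < j" using kj' by simp
  have "\<alpha> j \<in> span (\<alpha> ` (C - {j}))" by (rule circuit_span[OF C jC])
  moreover have "\<alpha> ` (C - {j}) \<subseteq> \<alpha> ` (insert k B)" using DB D j_def by auto
  ultimately have "\<alpha> j \<in> span (\<alpha> ` (insert k B))" using span_mono by blast
  then have "capB \<alpha> (insert k B) \<subseteq> hyp \<alpha> j" by (rule cap_if_in_span)
  then have "\<alpha> j \<bullet> z = 0" using z by (auto simp: capB_insert hyp_def)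
  moreover have "\<forall>b\<in>B. b < j" using B kj by fastforce
  then have "\<not> capB \<alpha> B \<subseteq> hyp \<alpha> j"
    using nbc_not_sub[OF nbc] jC Cs by blast
  moreover have "j \<in> {k+1..m}" using jC Cs kj by auto
  ultimately show False using zn by auto
  qed
  then show ?thesis using s1 s2 by (auto simp: NBC_def)
qed

definition Sset :: "(nat \<Rightarrow> real^'n) \<Rightarrow> nat set \<Rightarrow> (real^'n) set \<Rightarrow> (real^'n) set" where
  "Sset \<alpha> I V = {y\<in>V. \<forall>i\<in>I. \<not> V \<subseteq> hyp \<alpha> i \<longrightarrow> \<alpha> i \<bullet> y \<noteq> 0}"

definition Tset :: "(nat \<Rightarrow> real^'n) \<Rightarrow> nat set \<Rightarrow> (real^'n) set \<Rightarrow> real^'n \<Rightarrow> (real^'n) set" where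
  "Tset \<alpha> I V x = {y\<in>V. \<forall>i\<in>I. sgn (\<alpha> i \<bullet> y) = sgn (\<alpha> i \<bullet> x)}"

lemma sgn_comb:
  fixes p q u v :: real
  assumes "sgn p = s" "sgn q = s" "0 \<le> u" "0 \<le> v" "u + v = 1"
  shows "sgn (u * p + v * q) = s"
proof -
  consider "p > 0" "q > 0" | "p = 0" "q = 0" | "p < 0" "q < 0"
    using assms(1,2) by (cases p "0::real" rule: linorder_cases; cases q "0::real" rule: linorder_cases) (auto simp: sgn_if)
  then show ?thesis
  proof cases
    case 1
    have "u * p + v * q > 0"
    proof (cases "u = 0")
      case True then show ?thesis using 1 assms by simp
    next
      case False then have "u * p > 0" using 1 assms by simp
      moreover have "v * q \<ge> 0" using 1 assms by simp
      ultimately show ?thesis by simp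
    qed
    then show ?thesis using 1 assms by (simp add: sgn_if)
  next
    case 2 then show ?thesis using assms by simp
  next
    case 3
    have "u * p + v * q < 0"
    proof (cases "u = 0")
      case True then show ?thesis using 3 assms by (simp add: mult_pos_neg)
    next
      case False then have "u * p < 0" using 3 assms by (simp add: mult_pos_neg)
      moreover have "v * q \<le> 0" using 3 assms by (simp add: mult_nonneg_nonpos)
      ultimately show ?thesis by simp
    qed
    then show ?thesis using 3 assms by (simp add: sgn_if)
  qed
qed

lemma Tset_convex:
  assumes "convex V" shows "convex (Tset \<alpha> I V x)"
  unfolding convex_def
proof (intro ballI allI impI)
  fix y z :: "real^'a" and u v :: real
  assume y: "y \<in> Tset \<alpha> I V x" and z: "z \<in> Tset \<alpha> I V x" and uv: "0 \<le> u" "0 \<le> v" "u + v = 1"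
  have "u *\<^sub>R y + v *\<^sub>R z \<in> V" using y z uv assms by (auto simp: Tset_def convex_def)
  moreover have "sgn (\<alpha> i \<bullet> (u *\<^sub>R y + v *\<^sub>R z)) = sgn (\<alpha> i \<bullet> x)" if i: "i \<in> I" for i
  proof -
    have "\<alpha> i \<bullet> (u *\<^sub>R y + v *\<^sub>R z) = u * (\<alpha> i \<bullet> y) + v * (\<alpha> i \<bullet> z)" by (simp add: inner_add_right)
    moreover have "sgn (\<alpha> i \<bullet> y) = sgn (\<alpha> i \<bullet> x)" "sgn (\<alpha> i \<bullet> z) = sgn (\<alpha> i \<bullet> x)"
      using y z i by (auto simp: Tset_def)
    ultimately show ?thesis using sgn_comb uv by metis
  qed
  ultimately show "u *\<^sub>R y + v *\<^sub>R z \<in> Tset \<alpha> I V x" by (simp add: Tset_def)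
qed

lemma Tset_sub_Sset:
  assumes "x \<in> Sset \<alpha> I V" shows "Tset \<alpha> I V x \<subseteq> Sset \<alpha> I V"
proof
  fix y assume y: "y \<in> Tset \<alpha> I V x"
  have "\<alpha> i \<bullet> y \<noteq> 0" if "i \<in> I" "\<not> V \<subseteq> hyp \<alpha> i" for i
  proof -
    have "\<alpha> i \<bullet> x \<noteq> 0" using assms that by (simp add: Sset_def)
    moreover have "sgn (\<alpha> i \<bullet> y) = sgn (\<alpha> i \<bullet> x)" using y that by (simp add: Tset_def)
    ultimately show ?thesis by (metis sgn_zero_iff)
  qed
  then show "y \<in> Sset \<alpha> I V" using y by (simp add: Tset_def Sset_def)
qed

lemma comp_eq:
  assumes cV: "convex V" and x: "x \<in> Sset \<alpha> I V"
  shows "connected_component_set (Sset \<alpha> I V) x = Tset \<alpha> I V x"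
proof
  have xV: "x \<in> V" using x by (simp add: Sset_def)
  have "connected (Tset \<alpha> I V x)" using convex_connected Tset_convex[OF cV] by blast
  moreover have "x \<in> Tset \<alpha> I V x" using xV by (simp add: Tset_def)
  ultimately show "Tset \<alpha> I V x \<subseteq> connected_component_set (Sset \<alpha> I V) x"
    using connected_component_maximal Tset_sub_Sset[OF x] by blast
next
  show "connected_component_set (Sset \<alpha> I V) x \<subseteq> Tset \<alpha> I V x"
  proof
    fix y assume y: "y \<in> connected_component_set (Sset \<alpha> I V) x"
    let ?C = "connected_component_set (Sset \<alpha> I V) x"
    have CS: "?C \<subseteq> Sset \<alpha> I V" by (rule connected_component_subset)
    have con: "connected ?C" by simp
    have xC: "x \<in> ?C" using x by simp
    have xV: "x \<in> V" using x by (simp add: Sset_def)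
    have yS: "y \<in> Sset \<alpha> I V" using y CS by blast
    then have yV: "y \<in> V" by (simp add: Sset_def)
    have "sgn (\<alpha> i \<bullet> y) = sgn (\<alpha> i \<bullet> x)" if i: "i \<in> I" for i
    proof (cases "V \<subseteq> hyp \<alpha> i")
      case True then have "\<alpha> i \<bullet> x = 0" "\<alpha> i \<bullet> y = 0" using xV yV by (auto simp: hyp_def)
      then show ?thesis by simp
    next
      case False
      then have nx: "\<alpha> i \<bullet> x \<noteq> 0" and ny: "\<alpha> i \<bullet> y \<noteq> 0" using x yS i by (auto simp: Sset_def)
      show ?thesis
      proof (rule ccontr)
        assume ne: "sgn (\<alpha> i \<bullet> y) \<noteq> sgn (\<alpha> i \<bullet> x)"
        have "\<exists>z\<in>?C. \<alpha> i \<bullet> z = 0"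
        proof (cases "\<alpha> i \<bullet> x < 0")
          case True
          then have "\<alpha> i \<bullet> y > 0" using ne ny by (auto simp: sgn_if split: if_splits)
          then show ?thesis using connected_ivt_hyperplane[OF con xC y, of "\<alpha> i" 0] True by auto
        next
          case False
          then have "\<alpha> i \<bullet> x > 0" using nx by auto
          then have "\<alpha> i \<bullet> y < 0" using ne ny by (auto simp: sgn_if split: if_splits)
          then show ?thesis using connected_ivt_hyperplane[OF con y xC, of "\<alpha> i" 0] \<open>\<alpha> i \<bullet> x > 0\<close> by auto
        qed
        then obtain z where "z \<in> ?C" "\<alpha> i \<bullet> z = 0" by blast
        then show False using CS False i by (auto simp: Sset_def)
      qed
    qed
    then show "y \<in> Tset \<alpha> I V x" using yV by (simp add: Tset_def)
  qed
qed

lemma diff_eq_Sset: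
  "V - \<Union>{V \<inter> hyp \<alpha> i | i. i \<in> I \<and> V \<inter> hyp \<alpha> i \<noteq> V \<and> V \<inter> hyp \<alpha> i \<noteq> {}} = Sset \<alpha> I V"
  by (auto simp: Sset_def hyp_def)

lemma regions_char:
  assumes "convex V"
  shows "R \<in> regions V {V \<inter> hyp \<alpha> i | i. i \<in> I \<and> V \<inter> hyp \<alpha> i \<noteq> V \<and> V \<inter> hyp \<alpha> i \<noteq> {}}
     \<longleftrightarrow> (\<exists>x\<in>Sset \<alpha> I V. R = Tset \<alpha> I V x)"
  unfolding regions_def diff_eq_Sset components_iff using comp_eq[OF assms] by metis

lemma perturb:
  fixes a :: "nat \<Rightarrow> real^'n"
  assumes "finite I" "\<forall>i\<in>I. a i \<bullet> w \<noteq> 0"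
  shows "\<exists>e>0. \<forall>i\<in>I. sgn (a i \<bullet> (w + e *\<^sub>R v)) = sgn (a i \<bullet> w)"
proof -
  have ev: "\<forall>\<^sub>F e in at_right (0::real). sgn (a i \<bullet> (w + e *\<^sub>R v)) = sgn (a i \<bullet> w)" if i: "i \<in> I" for i
  proof -
    have lim: "((\<lambda>e. a i \<bullet> (w + e *\<^sub>R v)) \<longlongrightarrow> a i \<bullet> (w + 0 *\<^sub>R v)) (at_right (0::real))"
      by (intro tendsto_intros)
    then have lim': "((\<lambda>e. a i \<bullet> (w + e *\<^sub>R v)) \<longlongrightarrow> a i \<bullet> w) (at_right (0::real))" by simp
    show ?thesis
    proof (cases "a i \<bullet> w > 0")
      case True
      show ?thesis using order_tendstoD(1)[OF lim' True] by eventually_elim (use True in \<open>auto simp: sgn_if\<close>)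
    next
      case False
      then have n: "a i \<bullet> w < 0" using assms i by (meson linorder_neqE_linordered_idom)
      show ?thesis using order_tendstoD(2)[OF lim' n] by eventually_elim (use n in \<open>auto simp: sgn_if\<close>)
    qed
  qed
  have "\<forall>\<^sub>F e in at_right (0::real). 0 < e \<and> (\<forall>i\<in>I. sgn (a i \<bullet> (w + e *\<^sub>R v)) = sgn (a i \<bullet> w))"
    by (rule eventually_conj[OF eventually_at_right_less eventually_ball_finite[OF assms(1) ballI[OF ev]]])
  from eventually_happens'[OF trivial_limit_at_right_real this] show ?thesis by blast
qed

lemma capB_convex: "convex (capB \<alpha> B)"
  by (rule subspace_imp_convex[OF capB_subspace])

lemma reg_iff:
  "R \<in> regions (capB \<alpha> B) (restr \<alpha> m k B) \<longleftrightarrow>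
   (\<exists>x\<in>Sset \<alpha> {k+1..m} (capB \<alpha> B). R = Tset \<alpha> {k+1..m} (capB \<alpha> B) x)"
  unfolding restr_def by (rule regions_char[OF capB_convex])

lemma scrB_iff:
  "p \<in> scrB \<alpha> m k \<longleftrightarrow> (\<exists>B x. p = (B, Tset \<alpha> {k+1..m} (capB \<alpha> B) x) \<and> B \<subseteq> {1..k} \<and> NBC \<alpha> m B
       \<and> x \<in> Sset \<alpha> {k+1..m} (capB \<alpha> B))"
  unfolding scrB_def reg_iff by auto

lemma T_self: "x \<in> V \<Longrightarrow> x \<in> Tset \<alpha> I V x"
  by (simp add: Tset_def)

lemma T_eq: "y \<in> Tset \<alpha> I V x \<Longrightarrow> Tset \<alpha> I V y = Tset \<alpha> I V x"
  by (auto simp: Tset_def)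

lemma T_mono: "J \<subseteq> I \<Longrightarrow> Tset \<alpha> I V x \<subseteq> Tset \<alpha> J V x"
  by (auto simp: Tset_def)

lemma S_mono: "J \<subseteq> I \<Longrightarrow> Sset \<alpha> I V \<subseteq> Sset \<alpha> J V"
  by (auto simp: Sset_def)

lemma T_split: "Tset \<alpha> (insert k I) V x = {y \<in> Tset \<alpha> I V x. sgn (\<alpha> k \<bullet> y) = sgn (\<alpha> k \<bullet> x)}"
  by (auto simp: Tset_def)

lemma Ik: assumes "(k::nat) \<in> {1..m}" shows "{k - 1 + 1..m} = insert k {k+1..m}"
proof -
  have "k - 1 + 1 = k" using assms by (cases k) auto
  then show ?thesis using assms by auto
qed

lemma exists_pos:
  fixes \<alpha> :: "nat \<Rightarrow> real^'n"
  assumes "\<not> capB \<alpha> B \<subseteq> hyp \<alpha> k"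
  shows "\<exists>v\<in>capB \<alpha> B. \<alpha> k \<bullet> v > 0" "\<exists>v\<in>capB \<alpha> B. \<alpha> k \<bullet> v < 0"
proof -
  obtain v where v: "v \<in> capB \<alpha> B" "\<alpha> k \<bullet> v \<noteq> 0" using assms by (auto simp: hyp_def)
  have mv: "- v \<in> capB \<alpha> B" using v capB_subspace subspace_neg by blast
  show "\<exists>v\<in>capB \<alpha> B. \<alpha> k \<bullet> v > 0"
  proof (cases "\<alpha> k \<bullet> v > 0")
    case True then show ?thesis using v by blast
  next
    case False then have "\<alpha> k \<bullet> (- v) > 0" using v by auto
    then show ?thesis using mv by blast
  qed
  show "\<exists>v\<in>capB \<alpha> B. \<alpha> k \<bullet> v < 0"
  proof (cases "\<alpha> k \<bullet> v < 0")
    case True then show ?thesis using v by blast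
  next
    case False then have "\<alpha> k \<bullet> (- v) < 0" using v by auto
    then show ?thesis using mv by blast
  qed
qed

context
  fixes \<alpha> :: "nat \<Rightarrow> real^'n" and m k :: nat
  assumes k: "k \<in> {1..m}"
begin

lemma setup_nk:
  assumes "B \<subseteq> {1..k-1}" "NBC \<alpha> m B"
  shows "\<not> capB \<alpha> B \<subseteq> hyp \<alpha> k"
proof -
  have "\<forall>b\<in>B. b < k" using assms(1) k by fastforce
  then show ?thesis using nbc_not_sub[OF assms(2) k] by blast
qed

lemma x_facts:
  assumes B: "B \<subseteq> {1..k-1}" "NBC \<alpha> m B" and x: "x \<in> Sset \<alpha> (insert k {k+1..m}) (capB \<alpha> B)"
  shows "\<alpha> k \<bullet> x \<noteq> 0" "x \<in> Sset \<alpha> {k+1..m} (capB \<alpha> B)" "x \<in> capB \<alpha> B"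
  using x setup_nk[OF B] by (auto simp: Sset_def)

lemma unique_reg:
  assumes B: "B \<subseteq> {1..k-1}" "NBC \<alpha> m B" and x: "x \<in> Sset \<alpha> (insert k {k+1..m}) (capB \<alpha> B)"
  shows "(R \<in> regions (capB \<alpha> B) (restr \<alpha> m k B) \<and> Tset \<alpha> (insert k {k+1..m}) (capB \<alpha> B) x \<subseteq> R)
     \<longleftrightarrow> R = Tset \<alpha> {k+1..m} (capB \<alpha> B) x"
proof
  assume R: "R \<in> regions (capB \<alpha> B) (restr \<alpha> m k B) \<and> Tset \<alpha> (insert k {k+1..m}) (capB \<alpha> B) x \<subseteq> R"
  then obtain x' where x': "R = Tset \<alpha> {k+1..m} (capB \<alpha> B) x'" unfolding reg_iff by blast
  have "x \<in> Tset \<alpha> (insert k {k+1..m}) (capB \<alpha> B) x" using x_facts[OF B x] by (simp add: T_self)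
  then have "x \<in> Tset \<alpha> {k+1..m} (capB \<alpha> B) x'" using R x' by blast
  then show "R = Tset \<alpha> {k+1..m} (capB \<alpha> B) x" using x' T_eq by metis
next
  assume "R = Tset \<alpha> {k+1..m} (capB \<alpha> B) x"
  then show "R \<in> regions (capB \<alpha> B) (restr \<alpha> m k B) \<and> Tset \<alpha> (insert k {k+1..m}) (capB \<alpha> B) x \<subseteq> R"
    using x_facts[OF B x] T_mono[of "{k+1..m}" "insert k {k+1..m}"] unfolding reg_iff by blast
qed

lemma regDelta_eq:
  assumes B: "B \<subseteq> {1..k-1}" "NBC \<alpha> m B" and x: "x \<in> Sset \<alpha> (insert k {k+1..m}) (capB \<alpha> B)"
  shows "regDelta \<alpha> m k B (Tset \<alpha> (insert k {k+1..m}) (capB \<alpha> B) x) = Tset \<alpha> {k+1..m} (capB \<alpha> B) x"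
  unfolding regDelta_def using unique_reg[OF B x] by simp

lemma pos_iff:
  assumes B: "B \<subseteq> {1..k-1}" "NBC \<alpha> m B" and x: "x \<in> Sset \<alpha> (insert k {k+1..m}) (capB \<alpha> B)"
  shows "Tset \<alpha> (insert k {k+1..m}) (capB \<alpha> B) x \<subseteq> Hpos \<alpha> k \<longleftrightarrow> \<alpha> k \<bullet> x > 0"
    and "\<alpha> k \<bullet> x < 0 \<Longrightarrow> Tset \<alpha> (insert k {k+1..m}) (capB \<alpha> B) x \<subseteq> Hneg \<alpha> k"
proof -
  have xT: "x \<in> Tset \<alpha> (insert k {k+1..m}) (capB \<alpha> B) x" using x_facts[OF B x] by (simp add: T_self)
  show "Tset \<alpha> (insert k {k+1..m}) (capB \<alpha> B) x \<subseteq> Hpos \<alpha> k \<longleftrightarrow> \<alpha> k \<bullet> x > 0"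
  proof
    assume "Tset \<alpha> (insert k {k+1..m}) (capB \<alpha> B) x \<subseteq> Hpos \<alpha> k"
    then show "\<alpha> k \<bullet> x > 0" using xT by (auto simp: Hpos_def)
  next
    assume p: "\<alpha> k \<bullet> x > 0"
    show "Tset \<alpha> (insert k {k+1..m}) (capB \<alpha> B) x \<subseteq> Hpos \<alpha> k"
    proof
      fix y assume "y \<in> Tset \<alpha> (insert k {k+1..m}) (capB \<alpha> B) x"
      then have "sgn (\<alpha> k \<bullet> y) = sgn (\<alpha> k \<bullet> x)" by (simp add: Tset_def)
      then show "y \<in> Hpos \<alpha> k" using p by (simp add: Hpos_def sgn_if split: if_splits)
    qed
  qed
  assume n: "\<alpha> k \<bullet> x < 0"
  show "Tset \<alpha> (insert k {k+1..m}) (capB \<alpha> B) x \<subseteq> Hneg \<alpha> k"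
  proof
    fix y assume "y \<in> Tset \<alpha> (insert k {k+1..m}) (capB \<alpha> B) x"
    then have "sgn (\<alpha> k \<bullet> y) = sgn (\<alpha> k \<bullet> x)" by (simp add: Tset_def)
    then show "y \<in> Hneg \<alpha> k" using n by (simp add: Hneg_def sgn_if split: if_splits)
  qed
qed

definition condA :: "nat set \<Rightarrow> real^'n \<Rightarrow> bool" where
  "condA B x \<longleftrightarrow> \<alpha> k \<bullet> x > 0 \<and> (\<exists>y\<in>Tset \<alpha> {k+1..m} (capB \<alpha> B) x. \<alpha> k \<bullet> y \<le> 0)"

lemma phi_val:
  assumes B: "B \<subseteq> {1..k-1}" "NBC \<alpha> m B" and x: "x \<in> Sset \<alpha> (insert k {k+1..m}) (capB \<alpha> B)"
  shows "phi \<alpha> m k (B, Tset \<alpha> (insert k {k+1..m}) (capB \<alpha> B) x) =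
    (if condA B x then (insert k B, Tset \<alpha> {k+1..m} (capB \<alpha> B) x \<inter> hyp \<alpha> k)
     else (B, Tset \<alpha> {k+1..m} (capB \<alpha> B) x))"
proof -
  let ?D = "Tset \<alpha> (insert k {k+1..m}) (capB \<alpha> B) x"
  let ?D' = "Tset \<alpha> {k+1..m} (capB \<alpha> B) x"
  have ne: "\<alpha> k \<bullet> x > 0 \<Longrightarrow> ?D \<noteq> ?D' \<longleftrightarrow> (\<exists>y\<in>?D'. \<alpha> k \<bullet> y \<le> 0)"
  proof -
    assume p: "\<alpha> k \<bullet> x > 0"
    show ?thesis
    proof
      assume "?D \<noteq> ?D'"
      then obtain y where "y \<in> ?D'" "y \<notin> ?D" using T_mono[of "{k+1..m}" "insert k {k+1..m}"] by blast
      then have "y \<in> ?D'" "sgn (\<alpha> k \<bullet> y) \<noteq> sgn (\<alpha> k \<bullet> x)" unfolding T_split by auto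
      then show "\<exists>y\<in>?D'. \<alpha> k \<bullet> y \<le> 0" using p by (intro bexI[of _ y]) (auto simp: sgn_if split: if_splits)
    next
      assume "\<exists>y\<in>?D'. \<alpha> k \<bullet> y \<le> 0"
      then obtain y where "y \<in> ?D'" "\<alpha> k \<bullet> y \<le> 0" by blast
      then have "y \<notin> ?D" using p unfolding T_split by (auto simp: sgn_if split: if_splits)
      then show "?D \<noteq> ?D'" using \<open>y \<in> ?D'\<close> by blast
    qed
  qed
  show ?thesis
    unfolding phi_def Let_def fst_conv snd_conv regDelta_eq[OF B x] pos_iff(1)[OF B x] condA_def
    using ne by auto
qed

lemma caseA:
  assumes B: "B \<subseteq> {1..k-1}" "NBC \<alpha> m B" and x: "x \<in> Sset \<alpha> (insert k {k+1..m}) (capB \<alpha> B)"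
    and cA: "condA B x"
  shows "\<exists>z. z \<in> Tset \<alpha> {k+1..m} (capB \<alpha> B) x \<and> \<alpha> k \<bullet> z = 0
     \<and> z \<in> Sset \<alpha> {k+1..m} (capB \<alpha> (insert k B))
     \<and> Tset \<alpha> {k+1..m} (capB \<alpha> B) x \<inter> hyp \<alpha> k = Tset \<alpha> {k+1..m} (capB \<alpha> (insert k B)) z
     \<and> NBC \<alpha> m (insert k B)"
proof -
  let ?D' = "Tset \<alpha> {k+1..m} (capB \<alpha> B) x"
  obtain y where y: "y \<in> ?D'" "\<alpha> k \<bullet> y \<le> 0" and p: "\<alpha> k \<bullet> x > 0" using cA by (auto simp: condA_def)
  have xD: "x \<in> ?D'" using x_facts[OF B x] by (simp add: T_self)
  have "connected ?D'" using convex_connected Tset_convex[OF capB_convex] by blast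
  then obtain z where zD: "z \<in> ?D'" and z0: "\<alpha> k \<bullet> z = 0"
    using connected_ivt_hyperplane[of ?D' y x "\<alpha> k" 0] y xD p by auto
  have zs: "sgn (\<alpha> i \<bullet> z) = sgn (\<alpha> i \<bullet> x)" if "i \<in> {k+1..m}" for i
    using zD that by (simp add: Tset_def)
  have zV: "z \<in> capB \<alpha> (insert k B)" using zD z0 by (auto simp: Tset_def capB_insert hyp_def)
  have zn: "\<forall>j\<in>{k+1..m}. \<not> capB \<alpha> B \<subseteq> hyp \<alpha> j \<longrightarrow> \<alpha> j \<bullet> z \<noteq> 0"
  proof (intro ballI impI)
    fix j assume j: "j \<in> {k+1..m}" and nj: "\<not> capB \<alpha> B \<subseteq> hyp \<alpha> j"
    then have "\<alpha> j \<bullet> x \<noteq> 0" using x by (auto simp: Sset_def)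
    then show "\<alpha> j \<bullet> z \<noteq> 0" using zs[OF j] by (metis sgn_zero_iff)
  qed
  have zS: "z \<in> Sset \<alpha> {k+1..m} (capB \<alpha> (insert k B))"
    using zV zn unfolding Sset_def capB_insert by auto
  have eq: "?D' \<inter> hyp \<alpha> k = Tset \<alpha> {k+1..m} (capB \<alpha> (insert k B)) z"
    using zs unfolding Tset_def capB_insert by auto
  have nbc: "NBC \<alpha> m (insert k B)"
    by (rule nbc_insert[OF B(2) B(1) k]) (use zV zn in \<open>auto simp: capB_insert\<close>)
  show ?thesis using zD z0 zS eq nbc by blast
qed

lemma phi_into:
  assumes p: "p \<in> scrB \<alpha> m (k - 1)"
  shows "phi \<alpha> m k p \<in> scrB \<alpha> m k"
proof -
  obtain B x where px: "p = (B, Tset \<alpha> (insert k {k+1..m}) (capB \<alpha> B) x)" and B: "B \<subseteq> {1..k-1}" "NBC \<alpha> m B"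
    and x: "x \<in> Sset \<alpha> (insert k {k+1..m}) (capB \<alpha> B)"
    using p unfolding scrB_iff Ik[OF k] by blast
  show ?thesis
  proof (cases "condA B x")
    case True
    then obtain z where "z \<in> Sset \<alpha> {k+1..m} (capB \<alpha> (insert k B))"
     "Tset \<alpha> {k+1..m} (capB \<alpha> B) x \<inter> hyp \<alpha> k = Tset \<alpha> {k+1..m} (capB \<alpha> (insert k B)) z"
     "NBC \<alpha> m (insert k B)" using caseA[OF B x] by blast
    moreover have "insert k B \<subseteq> {1..k}" using B k by force
    ultimately show ?thesis unfolding px phi_val[OF B x] scrB_iff using True by auto
  next
    case False
    have "B \<subseteq> {1..k}" using B by force
    then show ?thesis unfolding px phi_val[OF B x] scrB_iff using False B x_facts[OF B x] by auto
  qed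
qed

lemma phi_inj: "inj_on (phi \<alpha> m k) (scrB \<alpha> m (k - 1))"
proof (rule inj_onI)
  fix p1 p2 assume p1: "p1 \<in> scrB \<alpha> m (k - 1)" and p2: "p2 \<in> scrB \<alpha> m (k - 1)"
    and eq: "phi \<alpha> m k p1 = phi \<alpha> m k p2"
  obtain B1 x1 where px1: "p1 = (B1, Tset \<alpha> (insert k {k+1..m}) (capB \<alpha> B1) x1)" and B1: "B1 \<subseteq> {1..k-1}" "NBC \<alpha> m B1"
    and x1: "x1 \<in> Sset \<alpha> (insert k {k+1..m}) (capB \<alpha> B1)"
    using p1 unfolding scrB_iff Ik[OF k] by blast
  obtain B2 x2 where px2: "p2 = (B2, Tset \<alpha> (insert k {k+1..m}) (capB \<alpha> B2) x2)" and B2: "B2 \<subseteq> {1..k-1}" "NBC \<alpha> m B2"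
    and x2: "x2 \<in> Sset \<alpha> (insert k {k+1..m}) (capB \<alpha> B2)"
    using p2 unfolding scrB_iff Ik[OF k] by blast
  have kB1: "k \<notin> B1" using B1 k by force
  have kB2: "k \<notin> B2" using B2 k by force
  note e = eq[unfolded px1 px2 phi_val[OF B1 x1] phi_val[OF B2 x2]]
  note f1 = x_facts[OF B1 x1] and f2 = x_facts[OF B2 x2]
  show "p1 = p2"
  proof (cases "condA B1 x1"; cases "condA B2 x2")
    assume c1: "condA B1 x1" and c2: "condA B2 x2"
    then have e1: "insert k B1 = insert k B2" and
      e2: "Tset \<alpha> {k+1..m} (capB \<alpha> B1) x1 \<inter> hyp \<alpha> k = Tset \<alpha> {k+1..m} (capB \<alpha> B2) x2 \<inter> hyp \<alpha> k"
      using e by auto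
    have BB: "B1 = B2" using e1 kB1 kB2 by (metis Diff_insert_absorb)
    obtain z where z: "z \<in> Tset \<alpha> {k+1..m} (capB \<alpha> B1) x1" "\<alpha> k \<bullet> z = 0" using caseA[OF B1 x1 c1] by blast
    then have "z \<in> Tset \<alpha> {k+1..m} (capB \<alpha> B2) x2" using e2 by (auto simp: hyp_def)
    then have TT: "Tset \<alpha> {k+1..m} (capB \<alpha> B1) x1 = Tset \<alpha> {k+1..m} (capB \<alpha> B1) x2"
      using z(1) T_eq BB by metis
    have "sgn (\<alpha> k \<bullet> x1) = sgn (\<alpha> k \<bullet> x2)" using c1 c2 by (simp add: condA_def)
    then show ?thesis unfolding px1 px2 T_split BB using TT[unfolded BB] by simp
  next
    assume c1: "condA B1 x1" and c2: "\<not> condA B2 x2"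
    then have "insert k B1 = B2" using e by auto
    then show ?thesis using kB2 by auto
  next
    assume c1: "\<not> condA B1 x1" and c2: "condA B2 x2"
    then have "B1 = insert k B2" using e by auto
    then show ?thesis using kB1 by auto
  next
    assume c1: "\<not> condA B1 x1" and c2: "\<not> condA B2 x2"
    then have BB: "B1 = B2" and TT: "Tset \<alpha> {k+1..m} (capB \<alpha> B1) x1 = Tset \<alpha> {k+1..m} (capB \<alpha> B2) x2"
      using e by auto
    have x1T: "x1 \<in> Tset \<alpha> {k+1..m} (capB \<alpha> B1) x1" using f1 by (simp add: T_self)
    have x2T: "x2 \<in> Tset \<alpha> {k+1..m} (capB \<alpha> B2) x2" using f2 by (simp add: T_self)
    have "sgn (\<alpha> k \<bullet> x1) = sgn (\<alpha> k \<bullet> x2)"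
    proof (cases "\<alpha> k \<bullet> x1 > 0")
      case True
      have "x2 \<in> Tset \<alpha> {k+1..m} (capB \<alpha> B1) x1" using x2T TT by simp
      then have "\<alpha> k \<bullet> x2 > 0" using c1 True unfolding condA_def by (meson not_le)
      then show ?thesis using True by simp
    next
      case False
      then have n1: "\<alpha> k \<bullet> x1 < 0" using f1 by auto
      have "\<not> \<alpha> k \<bullet> x2 > 0"
      proof
        assume "\<alpha> k \<bullet> x2 > 0"
        moreover have "x1 \<in> Tset \<alpha> {k+1..m} (capB \<alpha> B2) x2" using x1T TT by simp
        ultimately have "\<alpha> k \<bullet> x1 > 0" using c2 unfolding condA_def by (meson not_le)
        then show False using n1 by simp
      qed
      then have "\<alpha> k \<bullet> x2 < 0" using f2 by auto
      then show ?thesis using n1 by simp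
    qed
    then show ?thesis unfolding px1 px2 T_split BB using TT[unfolded BB] by simp
  qed
qed

lemma phi_surj: "scrB \<alpha> m k \<subseteq> phi \<alpha> m k ` scrB \<alpha> m (k - 1)"
proof
  fix q assume q: "q \<in> scrB \<alpha> m k"
  obtain B' w where qw: "q = (B', Tset \<alpha> {k+1..m} (capB \<alpha> B') w)" and B': "B' \<subseteq> {1..k}" "NBC \<alpha> m B'"
    and w: "w \<in> Sset \<alpha> {k+1..m} (capB \<alpha> B')"
    using q unfolding scrB_iff by blast
  have wV: "w \<in> capB \<alpha> B'" using w by (simp add: Sset_def)
  show "q \<in> phi \<alpha> m k ` scrB \<alpha> m (k - 1)"
  proof (cases "k \<in> B'")
    case True
    define B where "B = B' - {k}"
    have BB: "B' = insert k B" using True by (auto simp: B_def)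
    have B1: "B \<subseteq> {1..k-1}"
    proof
      fix b assume b: "b \<in> B"
      then have "1 \<le> b" "b \<le> k" "b \<noteq> k" using B'(1) by (auto simp: B_def)
      then show "b \<in> {1..k-1}" by auto
    qed
    have B2: "NBC \<alpha> m B" using nbc_subset[OF B'(2)] by (simp add: B_def)
    note B = B1 B2
    have nk: "\<not> capB \<alpha> B \<subseteq> hyp \<alpha> k" by (rule setup_nk[OF B])
    obtain v where v: "v \<in> capB \<alpha> B" "\<alpha> k \<bullet> v > 0" using exists_pos(1)[OF nk] by blast
    have wn: "\<forall>i\<in>{k+1..m}. \<alpha> i \<bullet> w \<noteq> 0"
    proof
      fix i assume i: "i \<in> {k+1..m}"
      have "\<forall>b\<in>B'. b < i" using B'(1) i by fastforce
      then have "\<not> capB \<alpha> B' \<subseteq> hyp \<alpha> i" using nbc_not_sub[OF B'(2)] i by auto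
      then show "\<alpha> i \<bullet> w \<noteq> 0" using w i by (simp add: Sset_def)
    qed
    obtain e where e: "e > 0" "\<forall>i\<in>{k+1..m}. sgn (\<alpha> i \<bullet> (w + e *\<^sub>R v)) = sgn (\<alpha> i \<bullet> w)"
      using perturb[OF finite_atLeastAtMost wn, of v] by blast
    define x where "x = w + e *\<^sub>R v"
    have wVB: "w \<in> capB \<alpha> B" and wk: "\<alpha> k \<bullet> w = 0" using wV BB by (auto simp: capB_insert hyp_def)
    have xV: "x \<in> capB \<alpha> B" unfolding x_def
      by (rule subspace_add[OF capB_subspace wVB subspace_scale[OF capB_subspace v(1)]])
    have xk: "\<alpha> k \<bullet> x > 0" using wk v e by (simp add: x_def inner_add_right)
    have xs: "sgn (\<alpha> i \<bullet> x) = sgn (\<alpha> i \<bullet> w)" if "i \<in> {k+1..m}" for i using e that by (simp add: x_def)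
    have "\<alpha> i \<bullet> x \<noteq> 0" if i: "i \<in> insert k {k+1..m}" for i
    proof (cases "i = k")
      case True then show ?thesis using xk by simp
    next
      case False then have "i \<in> {k+1..m}" using i by simp
      then show ?thesis using xs wn by (metis sgn_zero_iff)
    qed
    then have x: "x \<in> Sset \<alpha> (insert k {k+1..m}) (capB \<alpha> B)"
      unfolding Sset_def using xV by blast
    have wT: "w \<in> Tset \<alpha> {k+1..m} (capB \<alpha> B) x" using wVB xs by (simp add: Tset_def)
    have cA: "condA B x" unfolding condA_def using xk wT wk by (intro conjI bexI[OF _ wT]) auto
    have p: "(B, Tset \<alpha> (insert k {k+1..m}) (capB \<alpha> B) x) \<in> scrB \<alpha> m (k - 1)"
      unfolding scrB_iff Ik[OF k] using B x by blast
    have "Tset \<alpha> {k+1..m} (capB \<alpha> B) x \<inter> hyp \<alpha> k = Tset \<alpha> {k+1..m} (capB \<alpha> B') w"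
      unfolding BB Tset_def capB_insert using xs by auto
    then have "phi \<alpha> m k (B, Tset \<alpha> (insert k {k+1..m}) (capB \<alpha> B) x) = q"
      unfolding phi_val[OF B x] qw using cA BB by simp
    then show ?thesis using p by (metis imageI)
  next
    case False
    have B1': "B' \<subseteq> {1..k-1}"
    proof
      fix b assume b: "b \<in> B'"
      then have "1 \<le> b" "b \<le> k" "b \<noteq> k" using B'(1) False by auto
      then show "b \<in> {1..k-1}" by auto
    qed
    note B = B1' B'(2)
    have nk: "\<not> capB \<alpha> B' \<subseteq> hyp \<alpha> k" by (rule setup_nk[OF B])
    have T_S: "Tset \<alpha> {k+1..m} (capB \<alpha> B') w \<subseteq> Sset \<alpha> {k+1..m} (capB \<alpha> B')" by (rule Tset_sub_Sset[OF w])
    show ?thesis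
    proof (cases "\<exists>y\<in>Tset \<alpha> {k+1..m} (capB \<alpha> B') w. \<alpha> k \<bullet> y \<le> 0")
      case True
      then obtain y where y: "y \<in> Tset \<alpha> {k+1..m} (capB \<alpha> B') w" "\<alpha> k \<bullet> y \<le> 0" by blast
      have "\<exists>y'\<in>Tset \<alpha> {k+1..m} (capB \<alpha> B') w. \<alpha> k \<bullet> y' < 0"
      proof (cases "\<alpha> k \<bullet> y < 0")
        case True then show ?thesis using y by blast
      next
        case False
        then have y0: "\<alpha> k \<bullet> y = 0" using y by simp
        obtain v where v: "v \<in> capB \<alpha> B'" "\<alpha> k \<bullet> v < 0" using exists_pos(2)[OF nk] by blast
        let ?I0 = "{i\<in>{k+1..m}. \<alpha> i \<bullet> y \<noteq> 0}"
        obtain e where e: "e > 0" "\<forall>i\<in>?I0. sgn (\<alpha> i \<bullet> (y + e *\<^sub>R v)) = sgn (\<alpha> i \<bullet> y)"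
        proof -
          have "finite ?I0" by simp
          moreover have "\<forall>i\<in>?I0. \<alpha> i \<bullet> y \<noteq> 0" by blast
          ultimately show ?thesis using perturb[of ?I0 \<alpha> y v] that by blast
        qed
        define y' where "y' = y + e *\<^sub>R v"
        have yV: "y \<in> capB \<alpha> B'" using y by (simp add: Tset_def)
        have y'V: "y' \<in> capB \<alpha> B'" unfolding y'_def
          by (rule subspace_add[OF capB_subspace yV subspace_scale[OF capB_subspace v(1)]])
        have "sgn (\<alpha> i \<bullet> y') = sgn (\<alpha> i \<bullet> w)" if i: "i \<in> {k+1..m}" for i
        proof (cases "\<alpha> i \<bullet> y = 0")
          case True
          moreover have "sgn (\<alpha> i \<bullet> y) = sgn (\<alpha> i \<bullet> w)" using y(1) i unfolding Tset_def by blast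
          ultimately have "sgn (\<alpha> i \<bullet> w) = 0" by simp
          then have "\<alpha> i \<bullet> w = 0" by (simp add: sgn_zero_iff)
          then have "capB \<alpha> B' \<subseteq> hyp \<alpha> i" using w i by (auto simp: Sset_def)
          then have "\<alpha> i \<bullet> y' = 0" using y'V by (auto simp: hyp_def)
          then show ?thesis using \<open>\<alpha> i \<bullet> w = 0\<close> by simp
        next
          case False
          then have "sgn (\<alpha> i \<bullet> y') = sgn (\<alpha> i \<bullet> y)" using e i by (simp add: y'_def)
          then show ?thesis using y i by (simp add: Tset_def)
        qed
        then have "y' \<in> Tset \<alpha> {k+1..m} (capB \<alpha> B') w" using y'V by (simp add: Tset_def)
        moreover have "\<alpha> k \<bullet> y' < 0" using y0 v e by (simp add: y'_def inner_add_right mult_pos_neg)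
        ultimately show ?thesis by blast
      qed
      then obtain x where xT: "x \<in> Tset \<alpha> {k+1..m} (capB \<alpha> B') w" and xk: "\<alpha> k \<bullet> x < 0" by blast
      have x: "x \<in> Sset \<alpha> (insert k {k+1..m}) (capB \<alpha> B')"
      proof -
        have "x \<in> Sset \<alpha> {k+1..m} (capB \<alpha> B')" using T_S xT by blast
        then show ?thesis using xk unfolding Sset_def by auto
      qed
      have p: "(B', Tset \<alpha> (insert k {k+1..m}) (capB \<alpha> B') x) \<in> scrB \<alpha> m (k - 1)"
        unfolding scrB_iff Ik[OF k] using B x by blast
      have "\<not> condA B' x" using xk by (simp add: condA_def)
      then have "phi \<alpha> m k (B', Tset \<alpha> (insert k {k+1..m}) (capB \<alpha> B') x) = q"
        unfolding phi_val[OF B x] qw using T_eq[OF xT] by simp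
      then show ?thesis using p by (metis imageI)
    next
      case False
      have wT: "w \<in> Tset \<alpha> {k+1..m} (capB \<alpha> B') w" using wV by (simp add: T_self)
      then have wk: "\<alpha> k \<bullet> w > 0" using False not_le by blast
      have x: "w \<in> Sset \<alpha> (insert k {k+1..m}) (capB \<alpha> B')"
        using w wk by (auto simp: Sset_def)
      have p: "(B', Tset \<alpha> (insert k {k+1..m}) (capB \<alpha> B') w) \<in> scrB \<alpha> m (k - 1)"
        unfolding scrB_iff Ik[OF k] using B x by blast
      have "\<not> condA B' w" using False by (simp add: condA_def)
      then have "phi \<alpha> m k (B', Tset \<alpha> (insert k {k+1..m}) (capB \<alpha> B') w) = q"
        unfolding phi_val[OF B x] qw by simp
      then show ?thesis using p by (metis imageI)
    qed
  qed
qed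

lemma phi_bij: "bij_betw (phi \<alpha> m k) (scrB \<alpha> m (k - 1)) (scrB \<alpha> m k)"
  unfolding bij_betw_def using phi_inj phi_into phi_surj by blast

lemma part1:
  assumes p: "p \<in> scrB \<alpha> m (k - 1)"
  shows "(\<exists>!R. R \<in> regions (capB \<alpha> (fst p)) (restr \<alpha> m k (fst p)) \<and> snd p \<subseteq> R) \<and>
         (snd p \<subseteq> Hpos \<alpha> k \<or> snd p \<subseteq> Hneg \<alpha> k)"
proof -
  obtain B x where px: "p = (B, Tset \<alpha> (insert k {k+1..m}) (capB \<alpha> B) x)" and B: "B \<subseteq> {1..k-1}" "NBC \<alpha> m B"
    and x: "x \<in> Sset \<alpha> (insert k {k+1..m}) (capB \<alpha> B)"
    using p unfolding scrB_iff Ik[OF k] by blast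
  have "\<alpha> k \<bullet> x > 0 \<or> \<alpha> k \<bullet> x < 0" using x_facts[OF B x] by auto
  then have "snd p \<subseteq> Hpos \<alpha> k \<or> snd p \<subseteq> Hneg \<alpha> k" using pos_iff[OF B x] px by auto
  moreover have "\<exists>!R. R \<in> regions (capB \<alpha> (fst p)) (restr \<alpha> m k (fst p)) \<and> snd p \<subseteq> R"
    unfolding px fst_conv snd_conv unique_reg[OF B x] by simp
  ultimately show ?thesis by blast
qed

end

lemma nbc_empty:
  fixes \<alpha> :: "nat \<Rightarrow> real^'n"
  assumes nz: "\<forall>i\<in>{1..m}. \<alpha> i \<noteq> 0"
  shows "NBC \<alpha> m {}"
proof -
  have "\<not> broken_circuit \<alpha> m {}"
  proof
    assume "broken_circuit \<alpha> m {}"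
    then obtain C where C: "circuit \<alpha> m C" and D: "{} = C - {Max C}" unfolding broken_circuit_def by blast
    have Cs: "C \<subseteq> {1..m}" and cc: "circ_cond \<alpha> C" using C unfolding circuit_def by blast+
    then have cd: "card C = dim (\<alpha> ` C) + 1" by (simp add: circ_iff)
    have "C \<noteq> {}"
    proof
      assume "C = {}" then show False using cd by simp
    qed
    then obtain j where j: "j \<in> C" by blast
    have "C \<subseteq> {Max C}" using D by blast
    then have CC: "C = {j}" using j by blast
    then have d0: "dim (\<alpha> ` C) = 0" using cd by simp
    have "\<alpha> j = 0"
    proof (rule ccontr)
      assume "\<alpha> j \<noteq> 0"
      then have "dim {\<alpha> j} = 1" by (simp add: dim_insert)
      moreover have "\<alpha> ` C = {\<alpha> j}" using CC by simp
      ultimately show False using d0 by simp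
    qed
    moreover have "j \<in> {1..m}" using j Cs by blast
    ultimately show False using nz by blast
  qed
  moreover have "D = {}" if "D \<subseteq> {}" for D :: "nat set" using that by blast
  ultimately show ?thesis unfolding NBC_def using zero_capB by blast
qed

lemma capB_empty: "capB \<alpha> {} = UNIV"
  by (simp add: capB_def)

lemma scrB0:
  fixes \<alpha> :: "nat \<Rightarrow> real^'n"
  assumes nz: "\<forall>i\<in>{1..m}. \<alpha> i \<noteq> 0"
  shows "scrB \<alpha> m 0 = (\<lambda>\<Delta>. ({}, \<Delta>)) ` regionA \<alpha> m"
proof -
  have hU: "hyp \<alpha> i \<noteq> UNIV" if "i \<in> {1..m}" for i
  proof
    assume "hyp \<alpha> i = UNIV"
    then have "\<alpha> i \<in> hyp \<alpha> i" by simp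
    then have "\<alpha> i \<bullet> \<alpha> i = 0" by (simp add: hyp_def)
    then show False using nz that by simp
  qed
  have h0: "0 \<in> hyp \<alpha> i" for i by (simp add: hyp_def)
  have hE: "hyp \<alpha> i \<noteq> {}" for i using h0[of i] by blast
  have r: "restr \<alpha> m 0 {} = hyp \<alpha> ` {1..m}"
  proof
    show "restr \<alpha> m 0 {} \<subseteq> hyp \<alpha> ` {1..m}"
      unfolding restr_def capB_empty by auto
    show "hyp \<alpha> ` {1..m} \<subseteq> restr \<alpha> m 0 {}"
    proof
      fix H assume "H \<in> hyp \<alpha> ` {1..m}"
      then obtain i where i: "i \<in> {1..m}" "H = hyp \<alpha> i" by blast
      have "UNIV \<inter> hyp \<alpha> i \<noteq> UNIV" "UNIV \<inter> hyp \<alpha> i \<noteq> {}" "i \<in> {0+1..m}"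
        using hU[OF i(1)] hE[of i] i(1) by auto
      then show "H \<in> restr \<alpha> m 0 {}" unfolding restr_def capB_empty using i(2) by blast
    qed
  qed
  have e: "B \<subseteq> {1..0} \<longleftrightarrow> B = {}" for B :: "nat set" by auto
  show ?thesis
  proof
    show "scrB \<alpha> m 0 \<subseteq> (\<lambda>\<Delta>. ({}, \<Delta>)) ` regionA \<alpha> m"
    proof
      fix p assume "p \<in> scrB \<alpha> m 0"
      then obtain B \<Delta> where p: "p = (B, \<Delta>)" "B \<subseteq> {1..0}" "\<Delta> \<in> regions (capB \<alpha> B) (restr \<alpha> m 0 B)"
        unfolding scrB_def by blast
      then have "B = {}" using e by blast
      then have "\<Delta> \<in> regions (capB \<alpha> {}) (restr \<alpha> m 0 {})" using p(3) by simp
      then have "\<Delta> \<in> regions UNIV (hyp \<alpha> ` {1..m})" unfolding r capB_empty .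
      then have "\<Delta> \<in> regionA \<alpha> m" unfolding regionA_def .
      then show "p \<in> (\<lambda>\<Delta>. ({}, \<Delta>)) ` regionA \<alpha> m" using p(1) \<open>B = {}\<close> by blast
    qed
    show "(\<lambda>\<Delta>. ({}, \<Delta>)) ` regionA \<alpha> m \<subseteq> scrB \<alpha> m 0"
    proof
      fix p :: "nat set \<times> (real^'n) set" assume "p \<in> (\<lambda>\<Delta>. ({}, \<Delta>)) ` regionA \<alpha> m"
      then obtain \<Delta> where p: "p = ({}, \<Delta>)" "\<Delta> \<in> regionA \<alpha> m" by blast
      then have "\<Delta> \<in> regions (capB \<alpha> {}) (restr \<alpha> m 0 {})" unfolding regionA_def r capB_empty by simp
      then show "p \<in> scrB \<alpha> m 0" unfolding scrB_def using p(1) nbc_empty[OF nz] by blast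
    qed
  qed
qed

lemma scrBm:
  fixes \<alpha> :: "nat \<Rightarrow> real^'n"
  shows "scrB \<alpha> m m = (\<lambda>B. (B, capB \<alpha> B)) ` NBCset \<alpha> m"
proof -
  have T: "Tset \<alpha> {m+1..m} V x = V" for V and x :: "real^'n" by (auto simp: Tset_def)
  have S: "Sset \<alpha> {m+1..m} V = V" for V by (auto simp: Sset_def)
  have N: "NBC \<alpha> m B \<Longrightarrow> B \<subseteq> {1..m}" for B unfolding NBC_def by blast
  show ?thesis
  proof
    show "scrB \<alpha> m m \<subseteq> (\<lambda>B. (B, capB \<alpha> B)) ` NBCset \<alpha> m"
    proof
      fix p assume "p \<in> scrB \<alpha> m m"
      then obtain B x where p: "p = (B, Tset \<alpha> {m+1..m} (capB \<alpha> B) x)" "NBC \<alpha> m B"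
        unfolding scrB_iff by blast
      then have "p = (B, capB \<alpha> B)" using T by simp
      then show "p \<in> (\<lambda>B. (B, capB \<alpha> B)) ` NBCset \<alpha> m" using p(2) unfolding NBCset_def by blast
    qed
    show "(\<lambda>B. (B, capB \<alpha> B)) ` NBCset \<alpha> m \<subseteq> scrB \<alpha> m m"
    proof
      fix p assume "p \<in> (\<lambda>B. (B, capB \<alpha> B)) ` NBCset \<alpha> m"
      then obtain B where p: "p = (B, capB \<alpha> B)" "NBC \<alpha> m B" unfolding NBCset_def by blast
      then show "p \<in> scrB \<alpha> m m" unfolding scrB_iff T S using N[OF p(2)] zero_capB by blast
    qed
  qed
qed

lemma phiComp_bij:
  assumes "\<forall>k\<in>{1..m}. bij_betw (phi \<alpha> m k) (scrB \<alpha> m (k - 1)) (scrB \<alpha> m k)"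
  shows "j \<le> m \<Longrightarrow> bij_betw (phiComp \<alpha> m j) (scrB \<alpha> m 0) (scrB \<alpha> m j)"
proof (induction j)
  case 0
  show ?case unfolding phiComp.simps by (rule bij_betw_id)
next
  case (Suc j)
  have "bij_betw (phi \<alpha> m (Suc j)) (scrB \<alpha> m j) (scrB \<alpha> m (Suc j))"
    using assms Suc.prems by (metis atLeastAtMost_iff diff_Suc_1 le_add1 plus_1_eq_Suc)
  moreover have "bij_betw (phiComp \<alpha> m j) (scrB \<alpha> m 0) (scrB \<alpha> m j)" using Suc by simp
  ultimately show ?case unfolding phiComp.simps by (rule bij_betw_trans[rotated])
qed

theorem mainTheorem6:
  fixes \<alpha> :: "nat \<Rightarrow> real^'n" and m :: nat
  assumes "\<forall>i\<in>{1..m}. \<alpha> i \<noteq> 0"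
  shows "(\<forall>k\<in>{1..m}.
            (\<forall>p\<in>scrB \<alpha> m (k - 1).
               (\<exists>!R. R \<in> regions (capB \<alpha> (fst p)) (restr \<alpha> m k (fst p)) \<and> snd p \<subseteq> R) \<and>
               (snd p \<subseteq> Hpos \<alpha> k \<or> snd p \<subseteq> Hneg \<alpha> k)) \<and>
            bij_betw (phi \<alpha> m k) (scrB \<alpha> m (k - 1)) (scrB \<alpha> m k))
      \<and> (\<forall>\<Delta>\<in>regionA \<alpha> m. \<exists>B. phiComp \<alpha> m m ({}, \<Delta>) = (B, capB \<alpha> B))
      \<and> bij_betw (\<lambda>\<Delta>. fst (phiComp \<alpha> m m ({}, \<Delta>))) (regionA \<alpha> m) (NBCset \<alpha> m)"
proof -
  have P1: "\<forall>k\<in>{1..m}.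
            (\<forall>p\<in>scrB \<alpha> m (k - 1).
               (\<exists>!R. R \<in> regions (capB \<alpha> (fst p)) (restr \<alpha> m k (fst p)) \<and> snd p \<subseteq> R) \<and>
               (snd p \<subseteq> Hpos \<alpha> k \<or> snd p \<subseteq> Hneg \<alpha> k)) \<and>
            bij_betw (phi \<alpha> m k) (scrB \<alpha> m (k - 1)) (scrB \<alpha> m k)"
    using part1 phi_bij by blast
  then have bc: "bij_betw (phiComp \<alpha> m m) (scrB \<alpha> m 0) (scrB \<alpha> m m)"
    using phiComp_bij[of m \<alpha> m] by blast
  have b0: "bij_betw (\<lambda>\<Delta>. ({}, \<Delta>)) (regionA \<alpha> m) (scrB \<alpha> m 0)"
    unfolding scrB0[OF assms] by (rule bij_betw_imageI) (auto simp: inj_on_def)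
  have bm: "bij_betw fst (scrB \<alpha> m m) (NBCset \<alpha> m)"
    unfolding scrBm bij_betw_def inj_on_def by (auto simp: image_image)
  have P2: "\<forall>\<Delta>\<in>regionA \<alpha> m. \<exists>B. phiComp \<alpha> m m ({}, \<Delta>) = (B, capB \<alpha> B)"
  proof
    fix \<Delta> assume "\<Delta> \<in> regionA \<alpha> m"
    then have "({}, \<Delta>) \<in> scrB \<alpha> m 0" using b0 bij_betwE by blast
    then have "phiComp \<alpha> m m ({}, \<Delta>) \<in> scrB \<alpha> m m" using bc bij_betwE by blast
    then show "\<exists>B. phiComp \<alpha> m m ({}, \<Delta>) = (B, capB \<alpha> B)" unfolding scrBm by blast
  qed
  have "bij_betw (fst \<circ> (phiComp \<alpha> m m \<circ> (\<lambda>\<Delta>. ({}, \<Delta>)))) (regionA \<alpha> m) (NBCset \<alpha> m)"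
    by (rule bij_betw_trans[OF bij_betw_trans[OF b0 bc] bm])
  then have P3: "bij_betw (\<lambda>\<Delta>. fst (phiComp \<alpha> m m ({}, \<Delta>))) (regionA \<alpha> m) (NBCset \<alpha> m)"
    by (simp add: comp_def)
  show ?thesis using P1 P2 P3 by blast
qed

end
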